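(* Let $N\ge 1$ and consider subsystems $\Sigma_1,\dots,\Sigma_N$, their interconnection $\Sigma$, safe sets $X=\prod_{i=1}^N X_i$ and input sets $U=\prod_{i=1}^N U_i$, all as described in the context. For each $i\in[1;N]$ let $C_i:\mathbb{R}^{n_i}\rightrightarrows U_i$ be a safety controller for subsystem $\Sigma_i$ and safe set $X_i$. Define $C:\mathbb{R}^n\rightrightarrows U$ by $C(x)=\emptyset$ for $x\in\mathbb{R}^n\setminus X$ and, for $x=[x_1;\dots;x_N]\in X$ (i.e. $x_i\in X_i$ for all $i$), $$C(x)=\{u=[u_1;\dots;u_N]\in U \mid u_i\in C_i(x_i)\ \text{for all } i\in[1;N]\}.$$ Then $C$ is a safety controller for the interconnected system $\Sigma$ and safe set $X$.
   Context: Subsystem $\Sigma_i$ ($i\in[1;N]$) has state space $\mathbb{R}^{n_i}$, external input space $\mathbb{R}^{m_i}$, internal input $z_i=[z_{i1};\dots;z_{i(i-1)};z_{i(i+1)};\dots;z_{iN}]\in\mathbb{R}^{p_i}$ with $z_{ij}\in\mathbb{R}^{p_{ij}}$, a disturbance set $W_i\subseteq\mathbb{R}^{n_i}$, a state transition function $f_i:\mathbb{R}^{n_i}\times\mathbb{R}^{m_i}\times\mathbb{R}^{p_i}\times W_i\to\mathbb{R}^{n_i}$ (so $x_i(t+1)=f_i(x_i(t),u_i(t),z_i(t),w_i(t))$), and output maps $h_{ij}:\mathbb{R}^{n_i}\to\mathbb{R}^{q_{ij}}$, $j\in[1;N]$, where $q_{ji}=p_{ij}$ for $i\ne j$. The interconnected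 system $\Sigma$ has state space $\mathbb{R}^n$, $n=\sum_i n_i$, input space $\mathbb{R}^m$, $m=\sum_i m_i$, disturbance set $W=\prod_{i=1}^N W_i$, and transition function $f(x,u,w)=[f_1(x_1,u_1,z_1,w_1);\dots;f_N(x_N,u_N,z_N,w_N)]$ for $x=[x_1;\dots;x_N]$, $u=[u_1;\dots;u_N]$, $w=[w_1;\dots;w_N]$, where the interconnection variables are $z_{ij}=h_{ji}(x_j)$ for $i\neq j$. The sets $X_i\subseteq\mathbb{R}^{n_i}$ are compact safe sets and $U_i\subseteq\mathbb{R}^{m_i}$ admissible input sets. For $i\ne j$, sets $Z_{ij}\subseteq\mathbb{R}^{p_{ij}}$ are given with $h_{ji}(X_j)\subseteq Z_{ij}$, and $Z_i=\prod_{j\ne i}Z_{ij}$. A safety controller for $\Sigma$ and safe set $X$ is a set-valued map $C:\mathbb{R}^n\rightrightarrows U$ such that (1) $C(x)\subseteq U$ for all $x\in\mathbb{R}^n$; (2) $\mathrm{dom}(C)=\{x\in\mathbb{R}^n\mid C(x)\ne\emptyset\}\subseteq X$; (3) for all $x\in\mathrm{dom}(C)$, $u\in C(x)$, $w\in W$: $f(x,u,w)\in\mathrm{dom}(C)$. A safety controller for subsystem $\Sigma_i$ and safe set $X_i$ is a set-valued map $C_i:\mathbb{R}^{n_i}\rightrightarrows U_i$ with (1) $C_i(x_i)\subseteq U_i$ for all $x_i$; (2) $\mathrm{dom}(C_i)\subseteq X_i$; (3) for all $x_i\in\mathrm{dom}(C_i)$, $u_i\in C_i(x_i)$, $w_i\in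 W_i$, $z_i\in Z_i$: $f_i(x_i,u_i,z_i,w_i)\in\mathrm{dom}(C_i)$. *)

theory Defs
  imports "HOL-Analysis.Analysis"
begin

text \<open>Euclidean space R^k, rendered as real sequences supported on the first k
  coordinates (indices 0..k-1). With the product topology on nat => real this
  is homeomorphic to R^k, so compactness has its usual meaning.\<close>
definition rvec :: "nat \<Rightarrow> (nat \<Rightarrow> real) set" where
  "rvec k = {v. \<forall>j\<ge>k. v j = 0}"

type_synonym vec = "nat \<Rightarrow> real"

definition sub_safety_controller ::
  "nat \<Rightarrow> vec set \<Rightarrow> vec set \<Rightarrow> (nat \<Rightarrow> vec) set \<Rightarrow> vec set
   \<Rightarrow> (vec \<Rightarrow> vec \<Rightarrow> (nat \<Rightarrow> vec) \<Rightarrow> vec \<Rightarrow> vec) \<Rightarrow> (vec \<Rightarrow> vec set) \<Rightarrow> bool" where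
  "sub_safety_controller ni Ui Xi Zi Wi fi Ci \<longleftrightarrow>
     (\<forall>x\<in>rvec ni. Ci x \<subseteq> Ui) \<and>
     {x\<in>rvec ni. Ci x \<noteq> {}} \<subseteq> Xi \<and>
     (\<forall>x\<in>{x\<in>rvec ni. Ci x \<noteq> {}}. \<forall>u\<in>Ci x. \<forall>w\<in>Wi. \<forall>z\<in>Zi.
        fi x u z w \<in> {x\<in>rvec ni. Ci x \<noteq> {}})"

definition safety_controller ::
  "'x set \<Rightarrow> 'u set \<Rightarrow> 'x set \<Rightarrow> 'w set \<Rightarrow> ('x \<Rightarrow> 'u \<Rightarrow> 'w \<Rightarrow> 'x) \<Rightarrow> ('x \<Rightarrow> 'u set) \<Rightarrow> bool" where
  "safety_controller S U X W f C \<longleftrightarrow>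
     (\<forall>x\<in>S. C x \<subseteq> U) \<and>
     {x\<in>S. C x \<noteq> {}} \<subseteq> X \<and>
     (\<forall>x\<in>{x\<in>S. C x \<noteq> {}}. \<forall>u\<in>C x. \<forall>w\<in>W. f x u w \<in> {x\<in>S. C x \<noteq> {}})"

definition interconn :: "nat \<Rightarrow> (nat \<Rightarrow> nat \<Rightarrow> vec \<Rightarrow> vec) \<Rightarrow> (nat \<Rightarrow> vec) \<Rightarrow> nat \<Rightarrow> (nat \<Rightarrow> vec)" where
  "interconn N h x i = (\<lambda>j\<in>{1..N} - {i}. h j i (x j))"

text \<open>Transition function of the interconnected system, on stacked states
  x = [x_1; ...; x_N] represented as families indexed by {1..N}.\<close>
definition interconnected_f ::
  "nat \<Rightarrow> (nat \<Rightarrow> vec \<Rightarrow> vec \<Rightarrow> (nat \<Rightarrow> vec) \<Rightarrow> vec \<Rightarrow> vec) \<Rightarrow> (nat \<Rightarrow> nat \<Rightarrow> vec \<Rightarrow> vec)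
   \<Rightarrow> (nat \<Rightarrow> vec) \<Rightarrow> (nat \<Rightarrow> vec) \<Rightarrow> (nat \<Rightarrow> vec) \<Rightarrow> (nat \<Rightarrow> vec)" where
  "interconnected_f N f h x u w = (\<lambda>i\<in>{1..N}. f i (x i) (u i) (interconn N h x i) (w i))"

end

theory Submission
  imports Defs
begin

theorem theorem1:
  fixes N :: nat
    and n m :: "nat \<Rightarrow> nat"
    and p :: "nat \<Rightarrow> nat \<Rightarrow> nat"
    and f :: "nat \<Rightarrow> vec \<Rightarrow> vec \<Rightarrow> (nat \<Rightarrow> vec) \<Rightarrow> vec \<Rightarrow> vec"
    and h :: "nat \<Rightarrow> nat \<Rightarrow> vec \<Rightarrow> vec"
    and W X U :: "nat \<Rightarrow> vec set"
    and Z :: "nat \<Rightarrow> nat \<Rightarrow> vec set"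
    and Cs :: "nat \<Rightarrow> vec \<Rightarrow> vec set"
  assumes N: "N \<ge> 1"
    and W_sub: "\<And>i. i \<in> {1..N} \<Longrightarrow> W i \<subseteq> rvec (n i)"
    and f_maps: "\<And>i x u z w. i \<in> {1..N} \<Longrightarrow> x \<in> rvec (n i) \<Longrightarrow> u \<in> rvec (m i) \<Longrightarrow>
        z \<in> (\<Pi>\<^sub>E j\<in>{1..N} - {i}. rvec (p i j)) \<Longrightarrow> w \<in> W i \<Longrightarrow> f i x u z w \<in> rvec (n i)"
    and h_maps: "\<And>i j x. i \<in> {1..N} \<Longrightarrow> j \<in> {1..N} \<Longrightarrow> i \<noteq> j \<Longrightarrow> x \<in> rvec (n j) \<Longrightarrow>
        h j i x \<in> rvec (p i j)"
    and X_sub: "\<And>i. i \<in> {1..N} \<Longrightarrow> X i \<subseteq> rvec (n i)"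
    and X_compact: "\<And>i. i \<in> {1..N} \<Longrightarrow> compact (X i)"
    and U_sub: "\<And>i. i \<in> {1..N} \<Longrightarrow> U i \<subseteq> rvec (m i)"
    and Z_sub: "\<And>i j. i \<in> {1..N} \<Longrightarrow> j \<in> {1..N} \<Longrightarrow> i \<noteq> j \<Longrightarrow> Z i j \<subseteq> rvec (p i j)"
    and hX_Z: "\<And>i j. i \<in> {1..N} \<Longrightarrow> j \<in> {1..N} \<Longrightarrow> i \<noteq> j \<Longrightarrow> h j i ` X j \<subseteq> Z i j"
    and Cs_ctrl: "\<And>i. i \<in> {1..N} \<Longrightarrow>
        sub_safety_controller (n i) (U i) (X i) (\<Pi>\<^sub>E j\<in>{1..N} - {i}. Z i j) (W i) (f i) (Cs i)"
  shows "safety_controller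
           (\<Pi>\<^sub>E i\<in>{1..N}. rvec (n i))
           (\<Pi>\<^sub>E i\<in>{1..N}. U i)
           (\<Pi>\<^sub>E i\<in>{1..N}. X i)
           (\<Pi>\<^sub>E i\<in>{1..N}. W i)
           (interconnected_f N f h)
           (\<lambda>x. if x \<in> (\<Pi>\<^sub>E i\<in>{1..N}. X i)
                 then {u \<in> (\<Pi>\<^sub>E i\<in>{1..N}. U i). \<forall>i\<in>{1..N}. u i \<in> Cs i (x i)}
                 else {})"
proof -
  let ?C = "(\<lambda>x. if x \<in> (\<Pi>\<^sub>E i\<in>{1..N}. X i)
                 then {u \<in> (\<Pi>\<^sub>E i\<in>{1..N}. U i). \<forall>i\<in>{1..N}. u i \<in> Cs i (x i)}
                 else {})"
  have step: "interconnected_f N f h x u w \<in> {x \<in> (\<Pi>\<^sub>E i\<in>{1..N}. rvec (n i)). ?C x \<noteq> {}}"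
    if x: "x \<in> (\<Pi>\<^sub>E i\<in>{1..N}. X i)" and u: "u \<in> (\<Pi>\<^sub>E i\<in>{1..N}. U i)"
      and uc: "\<forall>i\<in>{1..N}. u i \<in> Cs i (x i)" and w: "w \<in> (\<Pi>\<^sub>E i\<in>{1..N}. W i)" for x u w
  proof -
    define y where "y = interconnected_f N f h x u w"
    have yi: "y i \<in> {v\<in>rvec (n i). Cs i v \<noteq> {}}" if i: "i \<in> {1..N}" for i
    proof -
      have sc: "sub_safety_controller (n i) (U i) (X i) (\<Pi>\<^sub>E j\<in>{1..N} - {i}. Z i j) (W i) (f i) (Cs i)"
        using Cs_ctrl i by blast
      have xi: "x i \<in> {v\<in>rvec (n i). Cs i v \<noteq> {}}" using PiE_mem[OF x i] i X_sub[OF i] uc by auto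
      have z: "interconn N h x i \<in> (\<Pi>\<^sub>E j\<in>{1..N} - {i}. Z i j)"
      proof -
        have "\<forall>j\<in>{1..N} - {i}. h j i (x j) \<in> Z i j"
        proof
          fix j assume j: "j \<in> {1..N} - {i}"
          then have "x j \<in> X j" using PiE_mem[OF x] by blast
          then show "h j i (x j) \<in> Z i j" using hX_Z[OF i, of j] j by blast
        qed
        then show ?thesis by (simp add: interconn_def)
      qed
      have "f i (x i) (u i) (interconn N h x i) (w i) \<in> {v\<in>rvec (n i). Cs i v \<noteq> {}}"
        using sc xi uc i w z unfolding sub_safety_controller_def by (auto simp: PiE_iff)
      then show ?thesis using i unfolding y_def interconnected_f_def by simp
    qed
    have yX: "y \<in> (\<Pi>\<^sub>E i\<in>{1..N}. X i)"
    proof -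
      have "y i \<in> X i" if i: "i \<in> {1..N}" for i
        using yi[OF i] Cs_ctrl[OF i] unfolding sub_safety_controller_def by blast
      moreover have "y \<in> extensional {1..N}" unfolding y_def interconnected_f_def by simp
      ultimately show ?thesis by (auto simp: PiE_iff)
    qed
    have yR: "y \<in> (\<Pi>\<^sub>E i\<in>{1..N}. rvec (n i))"
      using yX X_sub unfolding PiE_iff by (meson subsetD)
    define v where "v = (\<lambda>i\<in>{1..N}. SOME a. a \<in> Cs i (y i))"
    have vi: "v i \<in> Cs i (y i)" if i: "i \<in> {1..N}" for i
    proof -
      from yi[OF i] obtain a where "a \<in> Cs i (y i)" by auto
      then have "(SOME a. a \<in> Cs i (y i)) \<in> Cs i (y i)" by (metis someI_ex)
      then show ?thesis using i unfolding v_def by simp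
    qed
    have "v i \<in> U i" if i: "i \<in> {1..N}" for i
      using vi[OF i] yi[OF i] Cs_ctrl[OF i] unfolding sub_safety_controller_def by blast
    then have "v \<in> (\<Pi>\<^sub>E i\<in>{1..N}. U i)" unfolding v_def by (auto simp: PiE_iff)
    then have "v \<in> ?C y" using yX vi by simp
    then show ?thesis using yR unfolding y_def[symmetric] by blast
  qed
  show ?thesis unfolding safety_controller_def
    using step by (auto split: if_splits)
qed

end
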